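(* Let $n\geq 4$ be even and let $\mathrm{D}_{2n}=\langle a,b\mid a^n=b^2=1,\ b^{-1}ab=a^{-1}\rangle$. Let $H\subseteq\langle a^2\rangle$ and $K\subseteq a\langle a^2\rangle$ satisfy $H^{-1}=H$ and $K^{-1}=K$. Put $S=bH\cup K$ and $T=bH\cup bK$. Then $\mathrm{Cay}(\mathrm{D}_{2n},S)\cong\mathrm{Cay}(\mathrm{D}_{2n},T)$. In particular, if $\mathrm{D}_{2n}$ has the $|S|$-DCI property, then $K=\emptyset$.
   Context: For a group $G$ and a subset $S\subseteq G$ with $1\notin S$, the Cayley digraph $\mathrm{Cay}(G,S)$ has vertex set $G$ and arc set $\{(g,sg)\mid g\in G,\ s\in S\}$. $\mathrm{Cay}(G,S)$ is a CI-digraph if for every $T\subseteq G$ with $1\notin T$ and $\mathrm{Cay}(G,T)\cong\mathrm{Cay}(G,S)$ there is $\alpha\in\mathrm{Aut}(G)$ with $S^\alpha=T$. For a positive integer $m$, $G$ has the $m$-DCI property if every Cayley digraph $\mathrm{Cay}(G,S)$ with $|S|=m$ is a CI-digraph. $H^{-1}=\{h^{-1}\mid h\in H\}$. *)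

theory Defs
  imports "HOL-Algebra.Algebra"
begin

definition cay_arcs :: "('a, 'b) monoid_scheme \<Rightarrow> 'a set \<Rightarrow> ('a \<times> 'a) set" where
  "cay_arcs G S = {(g, s \<otimes>\<^bsub>G\<^esub> g) | g s. g \<in> carrier G \<and> s \<in> S}"

definition cay_isomorphic :: "('a, 'b) monoid_scheme \<Rightarrow> 'a set \<Rightarrow> 'a set \<Rightarrow> bool" where
  "cay_isomorphic G S T \<longleftrightarrow>
     (\<exists>f. bij_betw f (carrier G) (carrier G) \<and>
          (\<forall>x\<in>carrier G. \<forall>y\<in>carrier G.
              (x, y) \<in> cay_arcs G S \<longleftrightarrow> (f x, f y) \<in> cay_arcs G T))"

definition CI_digraph :: "('a, 'b) monoid_scheme \<Rightarrow> 'a set \<Rightarrow> bool" where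
  "CI_digraph G S \<longleftrightarrow>
     (\<forall>T. T \<subseteq> carrier G \<and> \<one>\<^bsub>G\<^esub> \<notin> T \<and> cay_isomorphic G T S \<longrightarrow>
          (\<exists>\<alpha>\<in>iso G G. \<alpha> ` S = T))"

definition DCI_property :: "('a, 'b) monoid_scheme \<Rightarrow> nat \<Rightarrow> bool" where
  "DCI_property G m \<longleftrightarrow>
     (\<forall>S. S \<subseteq> carrier G \<and> \<one>\<^bsub>G\<^esub> \<notin> S \<and> card S = m \<longrightarrow> CI_digraph G S)"

end

theory Submission
  imports Defs
begin

locale dih = group G for G (structure) +
  fixes n :: nat and a b :: 'a
  assumes n4: "n \<ge> 4" and evn: "even n"
    and a: "a \<in> carrier G" and b: "b \<in> carrier G"
    and gen: "generate G {a, b} = carrier G"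
    and ordG: "order G = 2 * n"
    and an: "a [^] n = \<one>" and b2: "b [^] (2::nat) = \<one>"
    and rel: "inv b \<otimes> a \<otimes> b = inv a"
begin

lemma bb: "b \<otimes> b = \<one>"
  using b2 b by (simp add: numeral_2_eq_2)

lemma binv: "inv b = b"
  using bb b inv_equality by blast

lemma conj_hom: "(\<lambda>x. b \<otimes> x \<otimes> b) \<in> hom G G"
  unfolding hom_def using b
  apply (auto simp: m_assoc)
  by (metis bb b m_assoc m_closed l_one)

lemma conj_pow: "b \<otimes> a [^] (k::int) \<otimes> b = a [^] (-k)"
proof -
  have "b \<otimes> a [^] k \<otimes> b = (b \<otimes> a \<otimes> b) [^] k"
    using hom_int_pow[OF conj_hom a is_group is_group] by simp
  also have "\<dots> = (inv a) [^] k" using rel binv by simp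
  also have "\<dots> = a [^] (-k)" using a by (simp add: int_pow_inv int_pow_neg)
  finally show ?thesis .
qed

lemma comm_pow: "a [^] (k::int) \<otimes> b = b \<otimes> a [^] (-k)"
proof -
  have "b \<otimes> (b \<otimes> a [^] k \<otimes> b) = a [^] k \<otimes> b"
    using a b bb by (simp add: m_assoc[symmetric])
  thus ?thesis using conj_pow by simp
qed

lemma apow_mult[simp]: "a [^] (i::int) \<otimes> a [^] j = a [^] (i+j)"
  using a by (simp add: int_pow_mult)

lemma apow_mult2[simp]: "a [^] (i::int) \<otimes> (a [^] j \<otimes> x) = a [^] (i+j) \<otimes> x"
  if "x \<in> carrier G" using a that by (simp add: m_assoc[symmetric])

lemma form: "x \<in> carrier G \<Longrightarrow> \<exists>i::int. x = a [^] i \<or> x = b \<otimes> a [^] i"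
proof -
  assume "x \<in> carrier G"
  hence "x \<in> generate G {a, b}" using gen by simp
  thus ?thesis
  proof (induction)
    case one
    then show ?case by (rule exI[of _ 0]) simp
  next
    case (incl h)
    then show ?case
      apply auto
      apply (rule exI[of _ 1]) using a apply simp
      apply (rule exI[of _ 0]) using b by simp
  next
    case (inv h)
    then show ?case
      apply auto
      apply (rule exI[of _ "-1"]) using a apply (simp add: int_pow_neg)
      apply (rule exI[of _ 0]) using binv b by simp
  next
    case (eng h1 h2)
    then obtain i j :: int where h1: "h1 = a [^] i \<or> h1 = b \<otimes> a [^] i"
      and h2: "h2 = a [^] j \<or> h2 = b \<otimes> a [^] j" by blast
    show ?case
    proof (cases "h1 = a [^] i")
      case True
      show ?thesis
      proof (cases "h2 = a [^] j")
        case True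
        thus ?thesis using \<open>h1 = _\<close> a by (metis int_pow_mult)
      next
        case False
        hence "h2 = b \<otimes> a [^] j" using h2 by blast
        hence "h1 \<otimes> h2 = b \<otimes> a [^] (-i + j)"
          using \<open>h1 = _\<close> a b comm_pow[of i] by (simp add: m_assoc[symmetric]) (simp add: m_assoc)
        thus ?thesis by blast
      qed
    next
      case False
      hence h1': "h1 = b \<otimes> a [^] i" using h1 by blast
      show ?thesis
      proof (cases "h2 = a [^] j")
        case True
        hence "h1 \<otimes> h2 = b \<otimes> a [^] (i + j)"
          using h1' a b by (simp add: m_assoc)
        thus ?thesis by blast
      next
        case False
        hence "h2 = b \<otimes> a [^] j" using h2 by blast
        hence "h1 \<otimes> h2 = b \<otimes> (a [^] i \<otimes> b) \<otimes> a [^] j"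
          using h1' a b by (simp add: m_assoc)
        also have "\<dots> = a [^] (-i + j)"
          using comm_pow[of i] a b bb by (simp add: m_assoc[symmetric])
        finally show ?thesis by blast
      qed
    qed
  qed
qed

lemma fin: "finite (carrier G)"
  using ordG n4 unfolding order_def by (metis card.infinite mult_is_0 not_numeral_le_zero le_0_eq)

lemma genA: "generate G {a} = {a [^] (k::int) | k. k \<in> UNIV}"
  using generate_pow[OF a] .

lemma carrier_sub: "carrier G \<subseteq> generate G {a} \<union> (\<lambda>y. b \<otimes> y) ` generate G {a}"
proof
  fix x assume "x \<in> carrier G"
  then obtain i :: int where "x = a [^] i \<or> x = b \<otimes> a [^] i" using form by blast
  thus "x \<in> generate G {a} \<union> (\<lambda>y. b \<otimes> y) ` generate G {a}"
    unfolding genA by blast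
qed

lemma fA: "finite (generate G {a})"
  using fin generate_incl[of "{a}"] a rev_finite_subset by auto

lemma ord_a: "ord a = n"
proof -
  have d: "ord a dvd n" using pow_eq_id[OF a] an by simp
  have fA: "finite (generate G {a})"
    using fin generate_incl[of "{a}"] a rev_finite_subset by auto
  have "2 * n = card (carrier G)" using ordG unfolding order_def by simp
  also have "\<dots> \<le> card (generate G {a} \<union> (\<lambda>y. b \<otimes> y) ` generate G {a})"
    using carrier_sub fA by (intro card_mono) auto
  also have "\<dots> \<le> card (generate G {a}) + card ((\<lambda>y. b \<otimes> y) ` generate G {a})"
    by (rule card_Un_le)
  also have "\<dots> \<le> 2 * card (generate G {a})"
    using card_image_le[OF fA, of "\<lambda>y. b \<otimes> y"] by simp
  finally have "n \<le> ord a" using generate_pow_card[OF a] by simp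
  moreover have "ord a \<le> n" using d n4 by (simp add: dvd_imp_le)
  ultimately show ?thesis by simp
qed

lemma aeq: "a [^] (i::int) = a [^] (j::int) \<longleftrightarrow> int n dvd (i - j)"
  using int_pow_eq[OF a, of i j] ord_a by (simp add: dvd_diff_commute)

lemma bneq: "a [^] (i::int) \<noteq> b \<otimes> a [^] (j::int)"
proof
  assume h: "a [^] i = b \<otimes> a [^] j"
  hence "b = a [^] (i - j)" using a b
    by (metis int_pow_closed int_pow_diff inv_solve_right)
  have "carrier G \<subseteq> generate G {a}"
  proof
    fix x assume "x \<in> carrier G"
    then obtain k :: int where "x = a [^] k \<or> x = b \<otimes> a [^] k" using form by blast
    hence "x = a [^] k \<or> x = a [^] (i - j + k)" using \<open>b = _\<close> by simp
    thus "x \<in> generate G {a}" unfolding genA by blast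
  qed
  hence "card (carrier G) \<le> card (generate G {a})"
    using fA by (intro card_mono) auto
  thus False using generate_pow_card[OF a] ord_a ordG n4 unfolding order_def by simp
qed

lemma inv1: "inv (a [^] (i::int)) = a [^] (-i)"
  using a by (simp add: int_pow_neg)

lemma inv2: "inv (b \<otimes> a [^] (i::int)) = b \<otimes> a [^] i"
proof -
  have "inv (b \<otimes> a [^] i) = inv (a [^] i) \<otimes> b" using a b binv by (simp add: inv_mult_group)
  also have "\<dots> = a [^] (-i) \<otimes> b" using inv1 by simp
  also have "\<dots> = b \<otimes> a [^] i" using comm_pow[of "-i"] by simp
  finally show ?thesis .
qed

lemma m2: "a [^] (i::int) \<otimes> (b \<otimes> a [^] j) = b \<otimes> a [^] (j - i)"
  using a b comm_pow[of i] by (simp add: m_assoc[symmetric]) (simp add: m_assoc)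

lemma m3: "(b \<otimes> a [^] (i::int)) \<otimes> a [^] j = b \<otimes> a [^] (i + j)"
  using a b by (simp add: m_assoc)

lemma m4: "(b \<otimes> a [^] (i::int)) \<otimes> (b \<otimes> a [^] j) = a [^] (j - i)"
proof -
  have "(b \<otimes> a [^] i) \<otimes> (b \<otimes> a [^] j) = b \<otimes> (a [^] i \<otimes> (b \<otimes> a [^] j))"
    using a b by (simp add: m_assoc)
  also have "\<dots> = a [^] (j - i)" using m2 a b bb by (simp add: m_assoc[symmetric])
  finally show ?thesis .
qed

lemma bbx: "x \<in> carrier G \<Longrightarrow> b \<otimes> (b \<otimes> x) = x"
  using b bb by (simp add: m_assoc[symmetric])

definition Ep where "Ep x \<longleftrightarrow> (\<exists>i::int. x = a [^] (2*i) \<or> x = b \<otimes> a [^] (2*i))"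

lemma dvd_even: "int n dvd (i - 2 * j) \<Longrightarrow> even (i::int)"
proof -
  assume "int n dvd (i - 2 * j)"
  moreover have "2 dvd int n" using evn by simp
  ultimately have "2 dvd (i - 2 * j)" using dvd_trans by blast
  thus ?thesis by simp
qed

lemma Ep_pow: "Ep (a [^] (i::int)) \<longleftrightarrow> even i"
proof
  assume "Ep (a [^] i)"
  then obtain j :: int where "a [^] i = a [^] (2*j) \<or> a [^] i = b \<otimes> a [^] (2*j)" unfolding Ep_def by blast
  thus "even i" using bneq aeq dvd_even by blast
next
  assume "even i" then obtain j where "i = 2 * j" by blast
  thus "Ep (a [^] i)" unfolding Ep_def by blast
qed

lemma Ep_bpow: "Ep (b \<otimes> a [^] (i::int)) \<longleftrightarrow> even i"
proof
  assume "Ep (b \<otimes> a [^] i)"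
  then obtain j :: int where "b \<otimes> a [^] i = a [^] (2*j) \<or> b \<otimes> a [^] i = b \<otimes> a [^] (2*j)" unfolding Ep_def by blast
  moreover have "b \<otimes> a [^] i = b \<otimes> a [^] (2*j) \<Longrightarrow> a [^] i = a [^] (2*j)"
    using a b by (meson int_pow_closed l_cancel)
  ultimately show "even i" using bneq aeq dvd_even by metis
next
  assume "even i" then obtain j where "i = 2 * j" by blast
  thus "Ep (b \<otimes> a [^] i)" unfolding Ep_def by blast
qed

lemma EpB: "x \<in> carrier G \<Longrightarrow> y \<in> carrier G \<Longrightarrow> Ep (y \<otimes> inv x) \<longleftrightarrow> (Ep x \<longleftrightarrow> Ep y)"
proof -
  assume "x \<in> carrier G" "y \<in> carrier G"
  then obtain i j :: int where x: "x = a [^] i \<or> x = b \<otimes> a [^] i"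
    and y: "y = a [^] j \<or> y = b \<otimes> a [^] j" using form by blast
  show ?thesis using x y
    by (auto simp: inv1 inv2 m2 m3 m4 Ep_pow Ep_bpow)
qed

lemma EpF1: "z \<in> carrier G \<Longrightarrow> Ep (b \<otimes> z) \<longleftrightarrow> Ep z"
proof -
  assume "z \<in> carrier G"
  then obtain i :: int where "z = a [^] i \<or> z = b \<otimes> a [^] i" using form by blast
  thus ?thesis using bbx[of "a [^] i"] a by (auto simp: Ep_pow Ep_bpow)
qed

lemma EpF2: "z \<in> carrier G \<Longrightarrow> Ep (z \<otimes> b) \<longleftrightarrow> Ep z"
proof -
  assume "z \<in> carrier G"
  then obtain i :: int where "z = a [^] i \<or> z = b \<otimes> a [^] i" using form by blast
  moreover have "b \<otimes> a [^] i \<otimes> b = a [^] (-i)" by (rule conj_pow)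
  ultimately show ?thesis using comm_pow[of i] by (auto simp: Ep_pow Ep_bpow)
qed

end

locale dihHK = dih +
  fixes H K :: "'a set"
  assumes Hs: "H \<subseteq> generate G {a [^] (2::nat)}"
    and Ks: "K \<subseteq> a <# generate G {a [^] (2::nat)}"
    and Hi: "(\<lambda>x. inv x) ` H = H" and Ki: "(\<lambda>x. inv x) ` K = K"
begin

lemma gen2: "generate G {a [^] (2::nat)} = {a [^] (2 * k) | k::int. True}"
proof -
  have "a [^] (2::nat) = a [^] (2::int)" by (metis int_pow_int of_nat_numeral)
  thus ?thesis using generate_pow[of "a [^] (2::nat)"] a by (simp add: int_pow_pow)
qed

lemma Hc: "h \<in> H \<Longrightarrow> \<exists>k::int. h = a [^] (2 * k)"
  using Hs gen2 by auto

lemma Kc: "x \<in> K \<Longrightarrow> \<exists>k::int. x = a [^] (2 * k + 1)"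
proof -
  assume "x \<in> K"
  then obtain k :: int where "x = a \<otimes> a [^] (2 * k)"
    using Ks gen2 unfolding l_coset_def by auto
  also have "\<dots> = a [^] (1 + 2 * k)" using apow_mult[of 1 "2*k"] a by simp
  finally show ?thesis by (metis add.commute)
qed

lemma Hcar: "H \<subseteq> carrier G" using Hc a by auto
lemma Kcar: "K \<subseteq> carrier G" using Kc a by fastforce

lemma invH: "h \<in> H \<Longrightarrow> inv h \<in> H" using Hi by blast
lemma invK: "h \<in> K \<Longrightarrow> inv h \<in> K" using Ki by blast

lemma bH_iff: "z \<in> b <# H \<longleftrightarrow> (\<exists>h\<in>H. z = b \<otimes> h)"
  unfolding l_coset_def by auto
lemma bK_iff: "z \<in> b <# K \<longleftrightarrow> (\<exists>h\<in>K. z = b \<otimes> h)"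
  unfolding l_coset_def by auto

lemma K_notEp: "x \<in> K \<Longrightarrow> \<not> Ep x"
  using Kc Ep_pow by fastforce
lemma bH_Ep: "h \<in> H \<Longrightarrow> Ep (b \<otimes> h)"
  using Hc Ep_bpow by fastforce
lemma bK_notEp: "h \<in> K \<Longrightarrow> \<not> Ep (b \<otimes> h)"
  using Kc Ep_bpow by fastforce

abbreviation "S \<equiv> (b <# H) \<union> K"
abbreviation "T \<equiv> (b <# H) \<union> (b <# K)"

lemma nbH: "\<not> Ep z \<Longrightarrow> z \<notin> b <# H"
proof
  assume "\<not> Ep z" "z \<in> b <# H"
  then obtain h where "h \<in> H" "z = b \<otimes> h" using bH_iff by blast
  thus False using bH_Ep \<open>\<not> Ep z\<close> by simp
qed

lemma nbK: "Ep z \<Longrightarrow> z \<notin> b <# K"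
proof
  assume "Ep z" "z \<in> b <# K"
  then obtain h where "h \<in> K" "z = b \<otimes> h" using bK_iff by blast
  thus False using bK_notEp \<open>Ep z\<close> by simp
qed

lemma nK: "Ep z \<Longrightarrow> z \<notin> K"
  using K_notEp by metis

lemma S1: "Ep z \<Longrightarrow> z \<in> S \<longleftrightarrow> z \<in> b <# H" using nK[of z] by simp
lemma S2: "\<not> Ep z \<Longrightarrow> z \<in> S \<longleftrightarrow> z \<in> K" using nbH[of z] by simp
lemma T1: "Ep z \<Longrightarrow> z \<in> T \<longleftrightarrow> z \<in> b <# H" using nbK[of z] by simp
lemma T2: "\<not> Ep z \<Longrightarrow> z \<in> T \<longleftrightarrow> z \<in> b <# K" using nbH[of z] by simp

lemma hb: "h \<in> H \<union> K \<Longrightarrow> h \<otimes> b = b \<otimes> inv h"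
proof -
  assume "h \<in> H \<union> K"
  then obtain i :: int where "h = a [^] i" using Hc Kc by blast
  thus ?thesis using comm_pow inv1 by simp
qed

lemma bhb: "h \<in> H \<union> K \<Longrightarrow> b \<otimes> h \<otimes> b = inv h"
proof -
  assume h: "h \<in> H \<union> K"
  hence hc: "h \<in> carrier G" using Hcar Kcar by blast
  have "b \<otimes> h \<otimes> b = b \<otimes> (h \<otimes> b)" using hc b by (simp add: m_assoc)
  also have "\<dots> = inv h" using hb[OF h] bbx hc by simp
  finally show ?thesis .
qed

lemma bzbb: "z \<in> carrier G \<Longrightarrow> b \<otimes> (b \<otimes> z \<otimes> b) \<otimes> b = z"
  using b bb by (simp add: m_assoc bbx)

lemma C: "z \<in> carrier G \<Longrightarrow> z \<in> b <# H \<longleftrightarrow> b \<otimes> z \<otimes> b \<in> b <# H"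
proof
  assume "z \<in> b <# H"
  then obtain h where h: "h \<in> H" "z = b \<otimes> h" using bH_iff by blast
  hence "b \<otimes> z \<otimes> b = h \<otimes> b" using bbx Hcar by auto
  also have "\<dots> = b \<otimes> inv h" using hb h by blast
  finally show "b \<otimes> z \<otimes> b \<in> b <# H" using bH_iff invH h by blast
next
  assume z: "z \<in> carrier G" and "b \<otimes> z \<otimes> b \<in> b <# H"
  then obtain h where h: "h \<in> H" "b \<otimes> z \<otimes> b = b \<otimes> h" using bH_iff by blast
  have "z = b \<otimes> (b \<otimes> h) \<otimes> b" using bzbb[OF z] h by simp
  also have "\<dots> = h \<otimes> b" using bbx Hcar h by auto
  also have "\<dots> = b \<otimes> inv h" using hb h by blast
  finally show "z \<in> b <# H" using bH_iff invH h by blast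
qed

lemma D: "z \<in> carrier G \<Longrightarrow> z \<in> K \<longleftrightarrow> b \<otimes> z \<otimes> b \<in> K"
proof
  assume "z \<in> K" thus "b \<otimes> z \<otimes> b \<in> K" using bhb invK by auto
next
  assume z: "z \<in> carrier G" and w: "b \<otimes> z \<otimes> b \<in> K"
  have "z = b \<otimes> (b \<otimes> z \<otimes> b) \<otimes> b" using bzbb[OF z] by simp
  also have "\<dots> = inv (b \<otimes> z \<otimes> b)" using bhb w by blast
  finally show "z \<in> K" using invK w by metis
qed

lemma E1: "z \<in> carrier G \<Longrightarrow> b \<otimes> z \<in> b <# K \<longleftrightarrow> z \<in> K"
  using bK_iff b Kcar by (metis l_cancel subsetD)

lemma E2: "z \<in> carrier G \<Longrightarrow> z \<otimes> b \<in> b <# K \<longleftrightarrow> b \<otimes> z \<otimes> b \<in> K"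
proof -
  assume z: "z \<in> carrier G"
  have "b \<otimes> z \<otimes> b = b \<otimes> (z \<otimes> b)" using z b by (simp add: m_assoc)
  thus ?thesis using E1[of "b \<otimes> (z \<otimes> b)"] bbx[of "z \<otimes> b"] z b by simp
qed

definition f where "f x = (if Ep x then x else b \<otimes> x)"

lemma f_car: "x \<in> carrier G \<Longrightarrow> f x \<in> carrier G"
  unfolding f_def using b by auto

lemma f_invol: "x \<in> carrier G \<Longrightarrow> f (f x) = x"
  unfolding f_def using EpF1 bbx b by auto

lemma f_bij: "bij_betw f (carrier G) (carrier G)"
  by (rule bij_betw_byWitness[where f'=f]) (auto simp: f_invol f_car)

lemma key: "x \<in> carrier G \<Longrightarrow> y \<in> carrier G \<Longrightarrow>
   (y \<otimes> inv x \<in> S \<longleftrightarrow> f y \<otimes> inv (f x) \<in> T)"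
proof -
  assume x: "x \<in> carrier G" and y: "y \<in> carrier G"
  define z where "z = y \<otimes> inv x"
  have zc: "z \<in> carrier G" using x y z_def by simp
  have EB: "Ep z \<longleftrightarrow> (Ep x \<longleftrightarrow> Ep y)" using EpB x y z_def by simp
  show ?thesis
  proof (cases "Ep x")
    case ex: True
    show ?thesis
    proof (cases "Ep y")
      case True
      have eq: "f y \<otimes> inv (f x) = z" unfolding f_def z_def using ex True by simp
      have "Ep z" using EB ex True by simp
      thus ?thesis unfolding eq z_def[symmetric] using S1[of z] T1[of z] by simp
    next
      case False
      have eq: "f y \<otimes> inv (f x) = b \<otimes> z" unfolding f_def z_def using ex False x y b by (simp add: m_assoc)
      have "\<not> Ep z" "\<not> Ep (b \<otimes> z)" using EB ex False EpF1 zc by auto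
      thus ?thesis unfolding eq z_def[symmetric] using S2[of z] T2[of "b \<otimes> z"] E1[OF zc] by simp
    qed
  next
    case ex: False
    show ?thesis
    proof (cases "Ep y")
      case True
      have eq: "f y \<otimes> inv (f x) = z \<otimes> b" unfolding f_def z_def using ex True x y b binv
        by (simp add: m_assoc inv_mult_group)
      have "\<not> Ep z" "\<not> Ep (z \<otimes> b)" using EB ex True EpF2 zc by auto
      thus ?thesis unfolding eq z_def[symmetric] using S2[of z] T2[of "z \<otimes> b"] E2[OF zc] D[OF zc] by simp
    next
      case False
      have eq: "f y \<otimes> inv (f x) = b \<otimes> z \<otimes> b" unfolding f_def z_def using ex False x y b binv
        by (simp add: m_assoc inv_mult_group)
      have "Ep z" "Ep (b \<otimes> z \<otimes> b)" using EB ex False EpF1 EpF2 zc b by auto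
      thus ?thesis unfolding eq z_def[symmetric] using S1[of z] T1[of "b \<otimes> z \<otimes> b"] C[OF zc] by simp
    qed
  qed
qed

lemma arcs_iff: "A \<subseteq> carrier G \<Longrightarrow> x \<in> carrier G \<Longrightarrow> y \<in> carrier G \<Longrightarrow>
   (x, y) \<in> cay_arcs G A \<longleftrightarrow> y \<otimes> inv x \<in> A"
proof -
  assume A: "A \<subseteq> carrier G" and x: "x \<in> carrier G" and y: "y \<in> carrier G"
  have "(x, y) \<in> cay_arcs G A \<longleftrightarrow> (\<exists>s\<in>A. y = s \<otimes> x)"
    unfolding cay_arcs_def using x by auto
  also have "\<dots> \<longleftrightarrow> y \<otimes> inv x \<in> A"
  proof
    assume "\<exists>s\<in>A. y = s \<otimes> x"
    then obtain s where "s \<in> A" "y = s \<otimes> x" by blast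
    moreover have "s \<in> carrier G" using A \<open>s \<in> A\<close> by blast
    ultimately show "y \<otimes> inv x \<in> A" using x by (simp add: m_assoc)
  next
    assume "y \<otimes> inv x \<in> A"
    moreover have "y = (y \<otimes> inv x) \<otimes> x" using x y by (simp add: m_assoc)
    ultimately show "\<exists>s\<in>A. y = s \<otimes> x" by blast
  qed
  finally show ?thesis .
qed

lemma Scar: "S \<subseteq> carrier G"
  using Hcar Kcar b unfolding l_coset_def by auto
lemma Tcar: "T \<subseteq> carrier G"
  using Hcar Kcar b unfolding l_coset_def by auto

lemma iso1: "cay_isomorphic G S T"
  unfolding cay_isomorphic_def
  using f_bij key f_car by (auto simp: arcs_iff[OF Scar] arcs_iff[OF Tcar])

lemma iso2: "cay_isomorphic G T S"
  unfolding cay_isomorphic_def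
proof (intro exI conjI ballI)
  show "bij_betw f (carrier G) (carrier G)" by (rule f_bij)
  fix x y assume x: "x \<in> carrier G" and y: "y \<in> carrier G"
  have "(f y \<otimes> inv (f x) \<in> S) \<longleftrightarrow> f (f y) \<otimes> inv (f (f x)) \<in> T"
    using key f_car x y by blast
  thus "(x, y) \<in> cay_arcs G T \<longleftrightarrow> (f x, f y) \<in> cay_arcs G S"
    using x y f_car f_invol by (simp add: arcs_iff[OF Scar] arcs_iff[OF Tcar])
qed

lemma one_bH: "\<one> \<notin> b <# H"
proof
  assume "\<one> \<in> b <# H"
  then obtain h where "h \<in> H" "\<one> = b \<otimes> h" using bH_iff by blast
  then obtain k :: int where "a [^] (0::int) = b \<otimes> a [^] (2 * k)" using Hc by fastforce
  thus False using bneq by blast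
qed

lemma Ep1: "Ep \<one>" using Ep_pow[of 0] by simp

lemma one_S: "\<one> \<notin> S" using S1[OF Ep1] one_bH by blast
lemma one_T: "\<one> \<notin> T" using T1[OF Ep1] one_bH by blast

lemma sq: "x \<in> carrier G \<Longrightarrow> x [^] (2::int) = x \<otimes> x"
  using int_pow_mult[of x 1 1] by simp

lemma noK: "DCI_property G (card S) \<Longrightarrow> K = {}"
proof (rule ccontr)
  assume dci: "DCI_property G (card S)" and ne: "K \<noteq> {}"
  have "CI_digraph G S" using dci Scar one_S unfolding DCI_property_def by blast
  then obtain \<alpha> where al: "\<alpha> \<in> iso G G" and img: "\<alpha> ` S = T"
    using Tcar one_T iso2 unfolding CI_digraph_def by blast
  have hom: "\<alpha> \<in> hom G G" and bij: "bij_betw \<alpha> (carrier G) (carrier G)"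
    using al unfolding iso_def by auto
  have aa: "\<alpha> a \<in> carrier G" using hom a by (rule hom_in_carrier)
  then obtain j :: int where j: "\<alpha> a = a [^] j \<or> \<alpha> a = b \<otimes> a [^] j" using form by blast
  have "\<alpha> a = a [^] j"
  proof (rule ccontr)
    assume "\<alpha> a \<noteq> a [^] j"
    hence aj: "\<alpha> a = b \<otimes> a [^] j" using j by blast
    have "\<alpha> (a [^] (2::int)) = \<alpha> a [^] (2::int)"
      using hom_int_pow[OF hom a is_group is_group] .
    also have "\<dots> = \<one>" using sq[OF aa] aj m4 by simp
    also have "\<dots> = \<alpha> (a [^] (0::int))"
      using hom_one[OF hom is_group is_group] by simp
    finally have "a [^] (2::int) = a [^] (0::int)"
      using bij a unfolding bij_betw_def inj_on_def by blast
    hence "int n dvd 2 - 0" using aeq by blast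
    hence "int n dvd int 2" by simp
    hence "n dvd 2" by (simp only: of_nat_dvd_iff)
    thus False using n4 dvd_imp_le[of n 2] by linarith
  qed
  obtain k where kK: "k \<in> K" using ne by blast
  then obtain m :: int where km: "k = a [^] (2 * m + 1)" using Kc by blast
  have "\<alpha> k = (a [^] j) [^] (2 * m + 1)"
    using km hom_int_pow[OF hom a is_group is_group] \<open>\<alpha> a = a [^] j\<close> by simp
  also have "\<dots> = a [^] (j * (2 * m + 1))" using a by (simp add: int_pow_pow)
  finally have ak: "\<alpha> k = a [^] (j * (2 * m + 1))" .
  have "\<alpha> k \<in> T" using img kK by blast
  then obtain h where "h \<in> H \<union> K" "\<alpha> k = b \<otimes> h" using bH_iff bK_iff by blast
  then obtain i :: int where "\<alpha> k = b \<otimes> a [^] i" using Hc Kc by blast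
  thus False using ak bneq by metis
qed

end

theorem lemma3p2:
  fixes G (structure) and n :: nat and a b :: 'a and H K :: "'a set"
  assumes "group G"
    and "n \<ge> 4" and "even n"
    and "a \<in> carrier G" and "b \<in> carrier G"
    and "generate G {a, b} = carrier G"
    and "order G = 2 * n"
    and "a [^] n = \<one>" and "b [^] (2::nat) = \<one>"
    and "inv b \<otimes> a \<otimes> b = inv a"
    and "H \<subseteq> generate G {a [^] (2::nat)}"
    and "K \<subseteq> a <# generate G {a [^] (2::nat)}"
    and "(\<lambda>x. inv x) ` H = H" and "(\<lambda>x. inv x) ` K = K"
  shows "cay_isomorphic G ((b <# H) \<union> K) ((b <# H) \<union> (b <# K)) \<and>
         (DCI_property G (card ((b <# H) \<union> K)) \<longrightarrow> K = {})"
proof -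
  interpret dihHK G n a b H K
    unfolding dihHK_def dih_def dih_axioms_def dihHK_axioms_def using assms by auto
  show ?thesis using iso1 noK by blast
qed

end
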